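(* Assume $\mathbb{E}\min(Z,W)=\infty$. Then, with probability one, $\liminf_{n\to\infty}\Lambda_n<\infty$.
   Context: Let $Z,W,(Z_n)_{n\ge1},(W_n)_{n\ge1}$ be independent, identically distributed random variables taking values in $\mathbb{N}=\{1,2,3,\dots\}$. Define sets $T_n\subset\mathbb{Z}$ recursively by $T_n=\{n\}$ for $n\le 0$ and $T_n=\{n\}\cup T_{n-Z_n}\cup T_{n-W_n}$ for $n\ge1$. Let $\mathcal{L}_n=T_n\cap\{0,-1,-2,\dots\}$ and $\Lambda_n=|\mathcal{L}_n|$. *)

theory Defs
  imports "HOL-Probability.Probability"
begin

text \<open>Membership in the random tree T_n for a fixed outcome, with
  zs k = Z_k, ws k = W_k.  T_n = {n} for n \<le> 0 and
  T_n = {n} \<union> T_(n - Z_n) \<union> T_(n - W_n) for n \<ge> 1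
  (the recursion is well-founded since Z_n, W_n \<ge> 1; we take it as the
  least set satisfying these rules).\<close>
inductive inT :: "(nat \<Rightarrow> nat) \<Rightarrow> (nat \<Rightarrow> nat) \<Rightarrow> int \<Rightarrow> int \<Rightarrow> bool"
  for zs ws :: "nat \<Rightarrow> nat" where
  self: "inT zs ws n n"
| left: "n \<ge> 1 \<Longrightarrow> inT zs ws (n - int (zs (nat n))) m \<Longrightarrow> inT zs ws n m"
| right: "n \<ge> 1 \<Longrightarrow> inT zs ws (n - int (ws (nat n))) m \<Longrightarrow> inT zs ws n m"

definition Tset :: "(nat \<Rightarrow> nat) \<Rightarrow> (nat \<Rightarrow> nat) \<Rightarrow> int \<Rightarrow> int set" where
  "Tset zs ws n = {m. inT zs ws n m}"

definition Lambda :: "(nat \<Rightarrow> nat) \<Rightarrow> (nat \<Rightarrow> nat) \<Rightarrow> int \<Rightarrow> nat" where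
  "Lambda zs ws n = card (Tset zs ws n \<inter> {..0})"

text \<open>The whole family (Z, W, Z_1, W_1, Z_2, W_2, ...) indexed by bool \<times> nat:
  index (True,0) is Z, (False,0) is W, (True,n) is Z_n and (False,n) is W_n for n \<ge> 1.\<close>
definition fam :: "('a \<Rightarrow> nat) \<Rightarrow> ('a \<Rightarrow> nat) \<Rightarrow> (nat \<Rightarrow> 'a \<Rightarrow> nat) \<Rightarrow> (nat \<Rightarrow> 'a \<Rightarrow> nat)
    \<Rightarrow> bool \<times> nat \<Rightarrow> 'a \<Rightarrow> nat" where
  "fam Z W Zs Ws i = (case i of (b, n) \<Rightarrow>
     if n = 0 then (if b then Z else W) else (if b then Zs n else Ws n))"

end

theory Submission imports Defs begin
lemma prod_one_minus_le_exp:
  fixes q :: "nat \<Rightarrow> real"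
  assumes "\<And>n. n \<in> A \<Longrightarrow> 0 \<le> 1 - q n" "finite A"
  shows "(\<Prod>n\<in>A. 1 - q n) \<le> exp (- (\<Sum>n\<in>A. q n))"
proof -
  have "(\<Prod>n\<in>A. 1 - q n) \<le> (\<Prod>n\<in>A. exp (- q n))"
    using assms(1) by (intro prod_mono) (auto intro: exp_minus_ge)
  also have "\<dots> = exp (- (\<Sum>n\<in>A. q n))"
    using assms(2) by (simp add: exp_sum sum_negf[symmetric])
  finally show ?thesis .
qed

lemma nonsummable_tail:
  fixes q :: "nat \<Rightarrow> real"
  assumes "\<And>n. 0 \<le> q n" "\<not> summable q"
  shows "\<exists>K. B \<le> (\<Sum>n\<in>{N..K}. q n)"
proof (rule ccontr)
  assume "\<not> ?thesis"
  hence h: "\<And>K. (\<Sum>n\<in>{N..K}. q n) < B" by (meson not_le)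
  have "summable q"
  proof (rule bounded_imp_summable[where B = "(\<Sum>k<N. q k) + B"])
    show "0 \<le> q n" for n by fact
    fix n
    have "(\<Sum>k\<le>n. q k) \<le> (\<Sum>k\<in>{..<N} \<union> {N..n}. q k)"
      by (rule sum_mono2) (auto intro: assms)
    also have "\<dots> = (\<Sum>k<N. q k) + (\<Sum>k\<in>{N..n}. q k)"
      by (rule sum.union_disjoint) auto
    also have "\<dots> \<le> (\<Sum>k<N. q k) + B" using h[of n] by simp
    finally show "(\<Sum>k\<le>n. q k) \<le> (\<Sum>k<N. q k) + B" .
  qed
  with assms show False by simp
qed

lemma (in prob_space) borel_cantelli2:
  fixes C :: "nat \<Rightarrow> 'a set"
  assumes ind: "indep_events C UNIV"
    and nsum: "\<not> summable (\<lambda>n. 1 - prob (C n))"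
  shows "AE \<omega> in M. \<forall>N. \<exists>n\<ge>N. \<omega> \<notin> C n"
proof -
  have ev: "C n \<in> events" for n using ind by (auto simp: indep_events_def)
  let ?q = "\<lambda>n. 1 - prob (C n)"
  have q0: "0 \<le> ?q n" for n by simp
  have "AE \<omega> in M. \<exists>n\<ge>N. \<omega> \<notin> C n" for N
  proof -
    define S where "S = (\<Inter>n\<in>{N..}. C n)"
    have S: "S \<in> events" unfolding S_def using ev by auto
    have bnd: "prob S \<le> exp (- B)" for B
    proof -
      obtain K where K: "B \<le> (\<Sum>n\<in>{N..K}. ?q n)"
        using nonsummable_tail[OF q0 nsum] by blast
      have "prob S \<le> (\<Prod>n\<in>{N..K}. prob (C n))"
      proof (cases "N \<le> K")
        case True
        have "prob S \<le> prob (\<Inter>n\<in>{N..K}. C n)"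
          apply (rule finite_measure_mono)
          using ev True by (auto simp: S_def)
        also have "\<dots> = (\<Prod>n\<in>{N..K}. prob (C n))"
          using ind True unfolding indep_events_def by auto
        finally show ?thesis .
      next
        case False
        then show ?thesis by simp
      qed
      also have "\<dots> = (\<Prod>n\<in>{N..K}. 1 - ?q n)" by simp
      also have "\<dots> \<le> exp (- (\<Sum>n\<in>{N..K}. ?q n))"
        by (rule prod_one_minus_le_exp) auto
      also have "\<dots> \<le> exp (- B)" using K by simp
      finally show ?thesis .
    qed
    have "prob S = 0"
    proof (rule ccontr)
      assume "prob S \<noteq> 0"
      hence p: "prob S > 0" using measure_nonneg[of M S] by linarith
      have "prob S \<le> exp (- (- ln (prob S / 2)))" by (rule bnd)
      also have "\<dots> = prob S / 2" using p by simp
      finally show False using p by simp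
    qed
    hence "emeasure M S = 0" using S by (simp add: emeasure_eq_measure)
    moreover have "{x\<in>space M. \<not> (\<exists>n\<ge>N. x \<notin> C n)} = S"
      using ev[of N] sets.sets_into_space[of "C N" M] by (auto simp: S_def)
    ultimately show ?thesis using S by (subst AE_iff_measurable) auto
  qed
  then show ?thesis by (subst AE_all_countable) auto
qed

lemma inT_nonpos: "inT zs ws m k \<Longrightarrow> m \<le> 0 \<Longrightarrow> k = m"
  by (induction rule: inT.induct) auto

lemma Lambda_le2:
  assumes "n \<ge> 1" "zs n \<ge> n" "ws n \<ge> n"
  shows "Lambda zs ws (int n) \<le> 2"
proof -
  have "Tset zs ws (int n) \<inter> {..0} \<subseteq> {int n - int (zs n), int n - int (ws n)}"
  proof
    fix k assume k: "k \<in> Tset zs ws (int n) \<inter> {..0}"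
    hence ik: "inT zs ws (int n) k" and k0: "k \<le> 0" by (auto simp: Tset_def)
    from ik show "k \<in> {int n - int (zs n), int n - int (ws n)}"
    proof (cases rule: inT.cases)
      case self then show ?thesis using assms k0 by simp
    next
      case left
      then show ?thesis using inT_nonpos[OF left(2)] assms by simp
    next
      case right
      then show ?thesis using inT_nonpos[OF right(2)] assms by simp
    qed
  qed
  hence "card (Tset zs ws (int n) \<inter> {..0}) \<le> card {int n - int (zs n), int n - int (ws n)}"
    by (intro card_mono) auto
  also have "\<dots> \<le> 2" by (simp add: card_insert_le_m1)
  finally show ?thesis by (simp add: Lambda_def)
qed

lemma liminf_freq_le:
  fixes f :: "nat \<Rightarrow> ereal"
  assumes "\<And>N. \<exists>n\<ge>N. f n \<le> c"
  shows "liminf f \<le> c"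
proof (rule Liminf_least)
  fix P assume "eventually P sequentially"
  then obtain N where N: "\<And>n. n \<ge> N \<Longrightarrow> P n" by (auto simp: eventually_sequentially)
  obtain n where "n \<ge> N" "f n \<le> c" using assms by blast
  then show "(INF x\<in>Collect P. f x) \<le> c" using N by (meson INF_lower2 mem_Collect_eq)
qed

theorem theorem2:
  fixes M :: "'a measure"
    and Z W :: "'a \<Rightarrow> nat"
    and Zs Ws :: "nat \<Rightarrow> 'a \<Rightarrow> nat"
  assumes "prob_space M"
    and indep: "prob_space.indep_vars M (\<lambda>_. count_space UNIV) (fam Z W Zs Ws) UNIV"
    and ident: "\<And>i. distr M (count_space UNIV) (fam Z W Zs Ws i) = distr M (count_space UNIV) Z"
    and pos: "\<And>i \<omega>. \<omega> \<in> space M \<Longrightarrow> fam Z W Zs Ws i \<omega> \<ge> 1"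
    and inf_mean: "(\<integral>\<^sup>+ \<omega>. ennreal (real (min (Z \<omega>) (W \<omega>))) \<partial>M) = \<infinity>"
  shows "AE \<omega> in M. liminf (\<lambda>n::nat. ereal (real (Lambda (\<lambda>k. Zs k \<omega>) (\<lambda>k. Ws k \<omega>) (int n)))) < \<infinity>"
proof -
  interpret prob_space M by fact
  define X where "X = fam Z W Zs Ws"
  have rv: "X i \<in> measurable M (count_space UNIV)" for i
    using indep unfolding indep_vars_def X_def by (cases i) auto
  have X0: "X (True, 0) = Z" "X (False, 0) = W" by (auto simp: X_def fam_def)
  have XS: "X (True, n) = Zs n" "X (False, n) = Ws n" if "n \<noteq> 0" for n
    using that by (auto simp: X_def fam_def)
  have evX: "{\<omega>\<in>space M. k \<le> X i \<omega>} \<in> events" for k i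
  proof -
    have "{\<omega>\<in>space M. k \<le> X i \<omega>} = X i -` {k..} \<inter> space M" by auto
    then show ?thesis using measurable_sets[OF rv] by simp
  qed
  define pz where "pz k = prob {\<omega>\<in>space M. k \<le> Z \<omega>}" for k
  have pX: "prob {\<omega>\<in>space M. k \<le> X i \<omega>} = pz k" for k i
  proof -
    have "prob {\<omega>\<in>space M. k \<le> X i \<omega>} = measure (distr M (count_space UNIV) (X i)) {k..}"
      using rv by (subst measure_distr) (auto intro!: arg_cong[where f=prob])
    also have "\<dots> = measure (distr M (count_space UNIV) Z) {k..}"
      using ident unfolding X_def by simp
    also have "\<dots> = pz k"
      using rv[of "(True,0)"] unfolding X0 pz_def
      by (subst measure_distr) (auto intro!: arg_cong[where f=prob])
    finally show ?thesis .
  qed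
  define A where "A n = {\<omega>\<in>space M. n \<le> X (True, n) \<omega> \<and> n \<le> X (False, n) \<omega>}" for n
  have pA: "prob {\<omega>\<in>space M. k \<le> X (True, n) \<omega> \<and> k \<le> X (False, n) \<omega>} = pz k * pz k" for k n
  proof -
    have "prob {\<omega>\<in>space M. k \<le> X (True, n) \<omega> \<and> k \<le> X (False, n) \<omega>}
        = prob (\<Inter>i\<in>{(True,n),(False,n)}. X i -` {k..} \<inter> space M)"
      by (intro arg_cong[where f=prob]) auto
    also have "\<dots> = (\<Prod>i\<in>{(True,n),(False,n)}. prob (X i -` {k..} \<inter> space M))"
      using indep unfolding X_def[symmetric] by (intro indep_varsD) auto
    also have "\<dots> = prob {\<omega>\<in>space M. k \<le> X (True, n) \<omega>} * prob {\<omega>\<in>space M. k \<le> X (False, n) \<omega>}"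
      by (simp add: vimage_def Int_def conj_commute)
    finally show ?thesis using pX by simp
  qed
  have evA: "A n \<in> events" for n
  proof -
    have "A n = {\<omega>\<in>space M. n \<le> X (True, n) \<omega>} \<inter> {\<omega>\<in>space M. n \<le> X (False, n) \<omega>}"
      by (auto simp: A_def)
    then show ?thesis using evX by auto
  qed
  have nsumq: "\<not> summable (\<lambda>n. pz (Suc n) * pz (Suc n))"
  proof
    assume sm: "summable (\<lambda>n. pz (Suc n) * pz (Suc n))"
    define B where "B n = {\<omega>\<in>space M. Suc n \<le> X (True, 0) \<omega> \<and> Suc n \<le> X (False, 0) \<omega>}" for n
    have evB: "B n \<in> events" for n
    proof -
      have "B n = {\<omega>\<in>space M. Suc n \<le> X (True, 0) \<omega>} \<inter> {\<omega>\<in>space M. Suc n \<le> X (False, 0) \<omega>}"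
        by (auto simp: B_def)
      then show ?thesis using evX by auto
    qed
    have pt: "ennreal (real (min (Z \<omega>) (W \<omega>))) = (\<Sum>n. indicator (B n) \<omega>)" if "\<omega> \<in> space M" for \<omega>
    proof -
      let ?m = "min (Z \<omega>) (W \<omega>)"
      have "(\<Sum>n. indicator (B n) \<omega> :: ennreal) = (\<Sum>n<?m. indicator (B n) \<omega>)"
        by (rule suminf_finite) (use that in \<open>auto simp: B_def X0 indicator_def\<close>)
      also have "\<dots> = (\<Sum>n<?m. 1)"
        by (rule sum.cong) (use that in \<open>auto simp: B_def X0 indicator_def\<close>)
      also have "\<dots> = ennreal (real ?m)" by (simp add: ennreal_of_nat_eq_real_of_nat)
      finally show ?thesis by simp
    qed
    have "\<infinity> = (\<integral>\<^sup>+ \<omega>. (\<Sum>n. indicator (B n) \<omega>) \<partial>M)"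
      unfolding inf_mean[symmetric] by (rule nn_integral_cong) (simp add: pt)
    also have "\<dots> = (\<Sum>n. emeasure M (B n))"
      using evB by (subst nn_integral_suminf) auto
    also have "\<dots> = (\<Sum>n. ennreal (pz (Suc n) * pz (Suc n)))"
      using pA evB unfolding B_def by (simp add: emeasure_eq_measure)
    also have "\<dots> = ennreal (\<Sum>n. pz (Suc n) * pz (Suc n))"
      using sm by (intro suminf_ennreal2) (auto simp: pz_def)
    finally show False by simp
  qed
  have nsum: "\<not> summable (\<lambda>n. 1 - prob (space M - A n))"
  proof
    assume "summable (\<lambda>n. 1 - prob (space M - A n))"
    hence "summable (\<lambda>n. 1 - prob (space M - A (Suc n)))" by (subst summable_Suc_iff)
    moreover have "1 - prob (space M - A (Suc n)) = pz (Suc n) * pz (Suc n)" for n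
      using evA pA by (simp add: prob_compl A_def)
    ultimately show False using nsumq by simp
  qed
  define K where "K n = {(True, n), (False, n)}" for n :: nat
  have ir: "indep_vars (\<lambda>j. PiM (K j) (\<lambda>_. count_space UNIV)) (\<lambda>j \<omega>. restrict (\<lambda>i. X i \<omega>) (K j)) UNIV"
    using indep unfolding X_def[symmetric]
    by (rule indep_vars_restrict) (auto simp: K_def disjoint_family_on_def)
  have ie: "indep_events (\<lambda>j. {\<omega>\<in>space M. \<not> (j \<le> restrict (\<lambda>i. X i \<omega>) (K j) (True, j)
        \<and> j \<le> restrict (\<lambda>i. X i \<omega>) (K j) (False, j))}) UNIV"
  proof (rule indep_eventsI_indep_vars[OF ir])
    fix j :: nat
    show "{x \<in> space (PiM (K j) (\<lambda>_. count_space UNIV)). \<not> (j \<le> x (True, j) \<and> j \<le> x (False, j))}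
        \<in> sets (PiM (K j) (\<lambda>_. count_space UNIV))"
    proof -
      have m: "(\<lambda>x. x i) \<in> measurable (PiM (K j) (\<lambda>_. count_space UNIV)) (count_space UNIV)"
        if "i \<in> K j" for i :: "bool \<times> nat"
        using that by (rule measurable_component_singleton)
      have "{x \<in> space (PiM (K j) (\<lambda>_. count_space UNIV)). \<not> (j \<le> x (True, j) \<and> j \<le> x (False, j))}
         = space (PiM (K j) (\<lambda>_. count_space UNIV)) -
           (((\<lambda>x. x (True, j)) -` {j..} \<inter> space (PiM (K j) (\<lambda>_. count_space UNIV))) \<inter>
            ((\<lambda>x. x (False, j)) -` {j..} \<inter> space (PiM (K j) (\<lambda>_. count_space UNIV))))"
        by auto
      also have "\<dots> \<in> sets (PiM (K j) (\<lambda>_. count_space UNIV))"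
        using measurable_sets[OF m[of "(True,j)"]] measurable_sets[OF m[of "(False,j)"]]
        by (auto simp: K_def)
      finally show ?thesis .
    qed
  qed
  have "(\<lambda>j. {\<omega>\<in>space M. \<not> (j \<le> restrict (\<lambda>i. X i \<omega>) (K j) (True, j)
        \<and> j \<le> restrict (\<lambda>i. X i \<omega>) (K j) (False, j))}) = (\<lambda>j. space M - A j)"
    by (auto simp: K_def A_def)
  with ie have ieC: "indep_events (\<lambda>j. space M - A j) UNIV" by simp
  have bc: "AE \<omega> in M. \<forall>N. \<exists>n\<ge>N. \<omega> \<notin> space M - A n"
    by (rule borel_cantelli2[OF ieC nsum])
  show ?thesis
    using bc AE_space
  proof eventually_elim
    case (elim \<omega>)
    have "\<exists>n\<ge>N. ereal (real (Lambda (\<lambda>k. Zs k \<omega>) (\<lambda>k. Ws k \<omega>) (int n))) \<le> 2" for N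
    proof -
      obtain n where n: "n \<ge> max N 1" "\<omega> \<in> A n" using elim by blast
      hence "Zs n \<omega> \<ge> n" "Ws n \<omega> \<ge> n" using XS[of n] by (auto simp: A_def)
      hence "Lambda (\<lambda>k. Zs k \<omega>) (\<lambda>k. Ws k \<omega>) (int n) \<le> 2"
        using n by (intro Lambda_le2) auto
      then show ?thesis using n by (intro exI[of _ n]) auto
    qed
    hence "liminf (\<lambda>n::nat. ereal (real (Lambda (\<lambda>k. Zs k \<omega>) (\<lambda>k. Ws k \<omega>) (int n)))) \<le> 2"
      by (rule liminf_freq_le)
    then show ?case by (rule le_less_trans) simp
  qed
qed

end
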